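(* Let $G=(V,E)$ be the complete graph on $V=\{1,\ldots,n\}$ with real edge weights $(a_{ij})$, and let $V=L\cup R$ be a partition with $\sum_{i\in L,\,j\in R}|a_{ij}|\geqslant\frac12\sum_{ij\in E}|a_{ij}|$. Then there exists $S\subseteq L$ with \[\sum_{j\in R}\left|\sum_{i\in S}a_{ij}\right|\geqslant\frac{1}{200\sqrt n}\sum_{ij\in E}|a_{ij}|.\]
   Context: $L\cap R=\emptyset$, and $a_{ij}=a_{ji}$ denotes the weight of the edge $\{i,j\}$. *)

theory Defs
  imports Complex_Main
begin

definition total_weight :: "nat \<Rightarrow> (nat \<Rightarrow> nat \<Rightarrow> real) \<Rightarrow> real" where
  "total_weight n a = (\<Sum>(i,j)\<in>{(i,j). i \<in> {1..n} \<and> j \<in> {1..n} \<and> i < j}. \<bar>a i j\<bar>)"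

end

theory Submission
  imports Defs "HOL-Analysis.Analysis"
begin

definition Dsum :: "(nat \<Rightarrow> real) \<Rightarrow> nat set \<Rightarrow> nat set \<Rightarrow> real" where
  "Dsum g L S = (\<Sum>i\<in>L. if i \<in> S then g i else - g i)"

lemma sum_Pow_insert:
  assumes "finite L" "k \<notin> L"
  shows "(\<Sum>S\<in>Pow (insert k L). h S) = (\<Sum>S\<in>Pow L. h S) + (\<Sum>S\<in>Pow L. h (insert k S))"
proof -
  have inj: "inj_on (insert k) (Pow L)" using assms(2) by (auto simp: inj_on_def)
  have disj: "Pow L \<inter> insert k ` Pow L = {}" using assms(2) by auto
  have "(\<Sum>S\<in>Pow (insert k L). h S) = (\<Sum>S\<in>Pow L \<union> insert k ` Pow L. h S)"
    by (simp add: Pow_insert)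
  also have "\<dots> = (\<Sum>S\<in>Pow L. h S) + (\<Sum>S\<in>insert k ` Pow L. h S)"
    using assms disj by (intro sum.union_disjoint) auto
  also have "(\<Sum>S\<in>insert k ` Pow L. h S) = (\<Sum>S\<in>Pow L. h (insert k S))"
    using inj by (simp add: sum.reindex)
  finally show ?thesis .
qed

lemma Dsum_insert1:
  assumes "finite L" "k \<notin> L" "S \<subseteq> L"
  shows "Dsum g (insert k L) S = Dsum g L S - g k"
  using assms unfolding Dsum_def by (auto simp: sum.insert_if)

lemma Dsum_insert2:
  assumes "finite L" "k \<notin> L" "S \<subseteq> L"
  shows "Dsum g (insert k L) (insert k S) = Dsum g L S + g k"
proof -
  have "(\<Sum>i\<in>L. if i \<in> insert k S then g i else - g i) = (\<Sum>i\<in>L. if i \<in> S then g i else - g i)"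
    using assms by (intro sum.cong) auto
  thus ?thesis using assms unfolding Dsum_def by (simp add: sum.insert_if)
qed

lemma moments:
  assumes "finite L"
  shows "(\<Sum>S\<in>Pow L. (Dsum g L S)^2) = 2^card L * (\<Sum>i\<in>L. (g i)^2)
       \<and> (\<Sum>S\<in>Pow L. (Dsum g L S)^4) \<le> 3 * 2^card L * (\<Sum>i\<in>L. (g i)^2)^2"
  using assms
proof (induction L rule: finite_induct)
  case empty
  then show ?case by (simp add: Dsum_def)
next
  case (insert k L)
  define N :: real where "N = 2^card L"
  define s where "s = (\<Sum>i\<in>L. (g i)^2)"
  define M2 where "M2 = (\<Sum>S\<in>Pow L. (Dsum g L S)^2)"
  define M4 where "M4 = (\<Sum>S\<in>Pow L. (Dsum g L S)^4)"
  define c where "c = g k"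
  have ih2: "M2 = N * s" and ih4: "M4 \<le> 3 * N * s^2"
    using insert.IH unfolding M2_def M4_def N_def s_def by auto
  have e: "(\<Sum>S\<in>Pow (insert k L). (Dsum g (insert k L) S)^p)
      = (\<Sum>S\<in>Pow L. (Dsum g L S - c)^p + (Dsum g L S + c)^p)" for p :: nat
    unfolding c_def
    using insert.hyps
    by (simp add: sum_Pow_insert Dsum_insert1 Dsum_insert2 sum.distrib)
  have cardN: "(2::real)^card (insert k L) = 2 * N"
    using insert.hyps by (simp add: N_def)
  have sN: "(\<Sum>i\<in>insert k L. (g i)^2) = s + c^2"
    using insert.hyps by (simp add: s_def c_def)
  have cP: "card (Pow L) = 2^card L" using insert.hyps by (simp add: card_Pow)
  have p2: "(\<Sum>S\<in>Pow L. (Dsum g L S - c)^2 + (Dsum g L S + c)^2) = 2 * M2 + 2 * N * c^2"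
  proof -
    have "(\<Sum>S\<in>Pow L. (Dsum g L S - c)^2 + (Dsum g L S + c)^2)
        = (\<Sum>S\<in>Pow L. 2 * (Dsum g L S)^2 + 2 * c^2)"
      by (intro sum.cong) (auto simp: power2_eq_square algebra_simps)
    also have "\<dots> = 2 * M2 + 2 * N * c^2"
      by (simp add: sum.distrib sum_distrib_left M2_def N_def cP)
    finally show ?thesis .
  qed
  have p4: "(\<Sum>S\<in>Pow L. (Dsum g L S - c)^4 + (Dsum g L S + c)^4) = 2 * M4 + 12 * c^2 * M2 + 2 * N * c^4"
  proof -
    have "(\<Sum>S\<in>Pow L. (Dsum g L S - c)^4 + (Dsum g L S + c)^4)
        = (\<Sum>S\<in>Pow L. 2 * (Dsum g L S)^4 + 12 * c^2 * (Dsum g L S)^2 + 2 * c^4)"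
      by (intro sum.cong) (auto simp: power2_eq_square power4_eq_xxxx algebra_simps)
    also have "\<dots> = 2 * M4 + 12 * c^2 * M2 + 2 * N * c^4"
      by (simp add: sum.distrib sum_distrib_left M2_def M4_def N_def cP)
    finally show ?thesis .
  qed
  have N0: "N \<ge> 0" by (simp add: N_def)
  have s0: "s \<ge> 0" by (simp add: s_def sum_nonneg)
  have "2 * M4 + 12 * c^2 * M2 + 2 * N * c^4 \<le> 3 * (2 * N) * (s + c^2)^2"
  proof -
    have "2 * M4 \<le> 6 * N * s^2" using ih4 by simp
    moreover have "N * c^4 \<le> 3 * N * c^4" using N0 by (simp add: mult_left_mono)
    ultimately show ?thesis unfolding ih2 by (simp add: power2_eq_square power4_eq_xxxx algebra_simps)
  qed
  then show ?case using e[of 2] e[of 4] p2 p4 cardN sN ih2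
    by (simp add: algebra_simps)
qed

lemma pointwise:
  fixes x t :: real assumes "t > 0"
  shows "x^2 / t - 4 * x^4 / (27 * t^3) \<le> \<bar>x\<bar>"
proof -
  define u where "u = \<bar>x\<bar>"
  have u0: "u \<ge> 0" by (simp add: u_def)
  have x2: "x^2 = u^2" and x4: "x^4 = u^4" by (simp_all add: u_def power_even_abs)
  have "0 \<le> u * (2*u - 3*t)^2 * (u + 3*t)" using u0 assms by simp
  hence "0 \<le> 27*t^3*u - 27*t^2*u^2 + 4*u^4"
    by (simp add: power2_eq_square power4_eq_xxxx power3_eq_cube algebra_simps)
  hence "u^2 * (27*t^2) - 4 * u^4 \<le> u * (27 * t^3)"
    by (simp add: power2_eq_square power3_eq_cube algebra_simps)
  hence "(u^2 * (27*t^2) - 4 * u^4) / (27 * t^3) \<le> u"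
    using assms by (simp add: divide_le_eq)
  moreover have "(u^2 * (27*t^2) - 4 * u^4) / (27 * t^3) = u^2 / t - 4 * u^4 / (27 * t^3)"
    using assms by (simp add: field_simps power2_eq_square power3_eq_cube)
  ultimately show ?thesis unfolding x2 x4 u_def[symmetric] by linarith
qed

lemma abs_moment:
  assumes "finite L"
  shows "(\<Sum>S\<in>Pow L. \<bar>Dsum g L S\<bar>) \<ge> 5/9 * 2^card L * sqrt (\<Sum>i\<in>L. (g i)^2)"
proof -
  define s where "s = (\<Sum>i\<in>L. (g i)^2)"
  define N :: real where "N = 2^card L"
  have m2: "(\<Sum>S\<in>Pow L. (Dsum g L S)^2) = N * s" and m4: "(\<Sum>S\<in>Pow L. (Dsum g L S)^4) \<le> 3 * N * s^2"
    using moments[OF assms, of g] by (auto simp: s_def N_def)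
  have s0: "s \<ge> 0" by (simp add: s_def sum_nonneg)
  show ?thesis
  proof (cases "s = 0")
    case True then show ?thesis by (simp add: s_def[symmetric] sum_nonneg)
  next
    case False
    hence sp: "s > 0" using s0 by simp
    define t where "t = sqrt s"
    have tp: "t > 0" using sp by (simp add: t_def)
    have t2: "t^2 = s" using s0 by (simp add: t_def)
    have "(\<Sum>S\<in>Pow L. (Dsum g L S)^2 / t - 4 * (Dsum g L S)^4 / (27 * t^3)) \<le> (\<Sum>S\<in>Pow L. \<bar>Dsum g L S\<bar>)"
      by (intro sum_mono pointwise tp)
    moreover have "(\<Sum>S\<in>Pow L. (Dsum g L S)^2 / t - 4 * (Dsum g L S)^4 / (27 * t^3))
        = (\<Sum>S\<in>Pow L. (Dsum g L S)^2) / t - 4 / (27 * t^3) * (\<Sum>S\<in>Pow L. (Dsum g L S)^4)"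
      by (simp add: sum_subtractf sum_divide_distrib sum_distrib_left)
    moreover have "4 / (27 * t^3) * (\<Sum>S\<in>Pow L. (Dsum g L S)^4) \<le> 4 / (27 * t^3) * (3 * N * s^2)"
      using m4 tp by (intro mult_left_mono) auto
    moreover have "N * s / t - 4 / (27 * t^3) * (3 * N * s^2) = 5/9 * N * t"
    proof -
      have ss: "s = t*t" using t2 by (simp add: power2_eq_square)
      show ?thesis unfolding ss using tp by (simp add: field_simps power3_eq_cube power2_eq_square)
    qed
    ultimately have "5/9 * N * t \<le> (\<Sum>S\<in>Pow L. \<bar>Dsum g L S\<bar>)" unfolding m2 by linarith
    thus ?thesis by (simp add: N_def t_def s_def)
  qed
qed

lemma Dsum_split:
  assumes "finite L" "S \<subseteq> L"
  shows "Dsum g L S = sum g S - sum g (L - S)"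
proof -
  have "Dsum g L S = (\<Sum>i\<in>S. if i \<in> S then g i else - g i) + (\<Sum>i\<in>L - S. if i \<in> S then g i else - g i)"
    unfolding Dsum_def using assms by (metis (no_types, lifting) add.commute sum.subset_diff)
  also have "\<dots> = sum g S - sum g (L - S)"
    by (simp add: sum_negf)
  finally show ?thesis .
qed

lemma per_column:
  fixes g :: "nat \<Rightarrow> real"
  assumes "finite L"
  shows "2 * (\<Sum>S\<in>Pow L. \<bar>sum g S\<bar>) \<ge> 5/9 * 2^card L * sqrt (\<Sum>i\<in>L. (g i)^2)"
proof -
  have bij: "bij_betw (\<lambda>S. L - S) (Pow L) (Pow L)"
    by (rule bij_betwI[where g="\<lambda>S. L - S"]) auto
  have c: "(\<Sum>S\<in>Pow L. \<bar>sum g (L - S)\<bar>) = (\<Sum>S\<in>Pow L. \<bar>sum g S\<bar>)"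
    using sum.reindex_bij_betw[OF bij, of "\<lambda>S. \<bar>sum g S\<bar>"] by simp
  have "(\<Sum>S\<in>Pow L. \<bar>Dsum g L S\<bar>) \<le> (\<Sum>S\<in>Pow L. \<bar>sum g S\<bar> + \<bar>sum g (L - S)\<bar>)"
    using assms by (intro sum_mono) (auto simp: Dsum_split)
  also have "\<dots> = 2 * (\<Sum>S\<in>Pow L. \<bar>sum g S\<bar>)" by (simp add: sum.distrib c)
  finally show ?thesis using abs_moment[OF assms, of g] by linarith
qed

lemma l1_l2:
  assumes "finite L" "card L \<le> n"
  shows "(\<Sum>i\<in>L. \<bar>g i\<bar>) \<le> sqrt (real n) * sqrt (\<Sum>i\<in>L. (g i)^2)"
proof -
  have "(\<Sum>i\<in>L. \<bar>g i\<bar>)^2 \<le> (\<Sum>i\<in>L. \<bar>g i\<bar>^2) * card L"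
    by (rule sum_squared_le_sum_of_squares)
  also have "\<dots> \<le> (\<Sum>i\<in>L. (g i)^2) * n"
    using assms by (intro mult_mono) (auto simp: sum_nonneg)
  finally have "(\<Sum>i\<in>L. \<bar>g i\<bar>)^2 \<le> (\<Sum>i\<in>L. (g i)^2) * n" .
  hence "sqrt ((\<Sum>i\<in>L. \<bar>g i\<bar>)^2) \<le> sqrt ((\<Sum>i\<in>L. (g i)^2) * n)"
    using real_sqrt_le_mono by blast
  moreover have "(\<Sum>i\<in>L. \<bar>g i\<bar>) \<ge> 0" by (simp add: sum_nonneg)
  ultimately show ?thesis by (simp add: real_sqrt_mult mult.commute)
qed

theorem mainTheorem9:
  fixes n :: nat and a :: "nat \<Rightarrow> nat \<Rightarrow> real" and L R :: "nat set"
  assumes sym: "\<And>i j. i \<in> {1..n} \<Longrightarrow> j \<in> {1..n} \<Longrightarrow> a i j = a j i"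
    and part: "L \<union> R = {1..n}" and disj: "L \<inter> R = {}"
    and cut: "(\<Sum>i\<in>L. \<Sum>j\<in>R. \<bar>a i j\<bar>) \<ge> 1/2 * total_weight n a"
  shows "\<exists>S\<subseteq>L. (\<Sum>j\<in>R. \<bar>\<Sum>i\<in>S. a i j\<bar>) \<ge> 1 / (200 * sqrt (real n)) * total_weight n a"
proof (cases "n = 0")
  case True
  then show ?thesis by (intro exI[of _ "{}"]) auto
next
  case False
  define W where "W = total_weight n a"
  define C where "C = (\<Sum>i\<in>L. \<Sum>j\<in>R. \<bar>a i j\<bar>)"
  define N :: real where "N = 2 ^ card L"
  define q where "q = sqrt (real n)"
  have qp: "q > 0" using False by (simp add: q_def)
  have finL: "finite L" and finR: "finite R" using part by (metis finite_Un finite_atLeastAtMost)+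
  have cardL: "card L \<le> n" using part by (metis card_atLeastAtMost card_mono diff_Suc_1 finite_atLeastAtMost sup_ge1)
  have W0: "W \<ge> 0" unfolding W_def total_weight_def by (intro sum_nonneg) auto
  have col: "2 * q * (\<Sum>S\<in>Pow L. \<bar>\<Sum>i\<in>S. a i j\<bar>) \<ge> 5/9 * N * (\<Sum>i\<in>L. \<bar>a i j\<bar>)" for j
  proof -
    have h1: "2 * (\<Sum>S\<in>Pow L. \<bar>\<Sum>i\<in>S. a i j\<bar>) \<ge> 5/9 * N * sqrt (\<Sum>i\<in>L. (a i j)^2)"
      using per_column[OF finL, of "\<lambda>i. a i j"] by (simp add: N_def)
    have h2: "(\<Sum>i\<in>L. \<bar>a i j\<bar>) \<le> q * sqrt (\<Sum>i\<in>L. (a i j)^2)"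
      using l1_l2[OF finL cardL, of "\<lambda>i. a i j"] by (simp add: q_def)
    have "5/9 * N * (\<Sum>i\<in>L. \<bar>a i j\<bar>) \<le> 5/9 * N * (q * sqrt (\<Sum>i\<in>L. (a i j)^2))"
      using h2 by (intro mult_left_mono) (auto simp: N_def)
    also have "\<dots> = q * (5/9 * N * sqrt (\<Sum>i\<in>L. (a i j)^2))" by simp
    also have "\<dots> \<le> q * (2 * (\<Sum>S\<in>Pow L. \<bar>\<Sum>i\<in>S. a i j\<bar>))"
      using h1 qp by (intro mult_left_mono) auto
    finally show ?thesis by simp
  qed
  have "5/9 * N * C = (\<Sum>j\<in>R. 5/9 * N * (\<Sum>i\<in>L. \<bar>a i j\<bar>))"
    unfolding C_def by (simp add: sum_distrib_left sum.swap[of _ L R])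
  also have "\<dots> \<le> (\<Sum>j\<in>R. 2 * q * (\<Sum>S\<in>Pow L. \<bar>\<Sum>i\<in>S. a i j\<bar>))"
    by (intro sum_mono col)
  also have "\<dots> = 2 * q * (\<Sum>S\<in>Pow L. \<Sum>j\<in>R. \<bar>\<Sum>i\<in>S. a i j\<bar>)"
    by (simp add: sum_distrib_left sum.swap[of _ R "Pow L"])
  finally have tot: "5/9 * N * C \<le> 2 * q * (\<Sum>S\<in>Pow L. \<Sum>j\<in>R. \<bar>\<Sum>i\<in>S. a i j\<bar>)" .
  define c where "c = W / (200 * q)"
  have "2 * q * (N * c) \<le> 5/9 * N * C"
  proof -
    have "2 * q * c = W / 100" using qp by (simp add: c_def)
    moreover have "W / 100 \<le> 5/9 * C" using cut W0 unfolding C_def W_def by linarith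
    moreover have "N > 0" by (simp add: N_def)
    ultimately show ?thesis by (smt (verit) mult.assoc mult.commute mult_left_mono)
  qed
  with tot have "N * c \<le> (\<Sum>S\<in>Pow L. \<Sum>j\<in>R. \<bar>\<Sum>i\<in>S. a i j\<bar>)"
    using qp by (smt (verit) mult_le_cancel_left_pos)
  hence ex: "\<exists>S\<in>Pow L. c \<le> (\<Sum>j\<in>R. \<bar>\<Sum>i\<in>S. a i j\<bar>)"
  proof (rule contrapos_pp)
    assume "\<not> (\<exists>S\<in>Pow L. c \<le> (\<Sum>j\<in>R. \<bar>\<Sum>i\<in>S. a i j\<bar>))"
    hence "(\<Sum>S\<in>Pow L. \<Sum>j\<in>R. \<bar>\<Sum>i\<in>S. a i j\<bar>) < (\<Sum>S\<in>Pow L. c)"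
      using finL by (intro sum_strict_mono) (auto simp: not_le)
    also have "(\<Sum>S\<in>Pow L. c) = N * c" using finL by (simp add: N_def card_Pow)
    finally show "\<not> N * c \<le> (\<Sum>S\<in>Pow L. \<Sum>j\<in>R. \<bar>\<Sum>i\<in>S. a i j\<bar>)" by simp
  qed
  then obtain S where "S \<subseteq> L" "c \<le> (\<Sum>j\<in>R. \<bar>\<Sum>i\<in>S. a i j\<bar>)" by auto
  thus ?thesis unfolding c_def W_def q_def by auto
qed

end
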